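(* Let $\mathcal{D}$ be an abstract system of proof notations and $s\in\mathbb{N}$. If $\mathcal{D}$ is $s$-bounded and $d\in\mathbb{E}(\mathcal{D})$, then every $d'\in\mathbb{E}(\mathcal{D})$ with $d\to^\ast d'$ (reflexive transitive closure of $\to$ in $\mathbb{E}(\mathcal{D})$) satisfies $|d'|\le\vartheta_d(s)$; i.e. the set $\{d'\in\mathbb{E}(\mathcal{D}): d\to^\ast d'\}$ is $\vartheta_d(s)$-bounded.
   Context: An abstract system of proof notations is a set $\mathcal{D}$ with functions $|\cdot|,o(\cdot)\colon\mathcal{D}\to\mathbb{N}\setminus\{0\}$ (size and height) and a relation $\to\subseteq\mathcal{D}\times\mathcal{D}$ such that $d\to d'$ implies $o(d')<o(d)$. The cut-elimination closure $\mathbb{E}(\mathcal{D})$ is the abstract system of formal terms inductively generated by: every $d\in\mathcal{D}$ is in $\mathbb{E}(\mathcal{D})$ (with size and height inherited); if $d,e\in\mathbb{E}(\mathcal{D})$ then $\mathsf{I}d,\ \mathsf{R}de,\ \mathsf{E}d\in\mathbb{E}(\mathcal{D})$ ($\mathsf I,\mathsf R,\mathsf E$ new symbols), with $|\mathsf Id|=|d|+1$, $|\mathsf Rde|=|d|+|e|+1$, $|\mathsf Ed|=|d|+1$, $o(\mathsf Id)=o(d)$, $o(\mathsf Rde)=o(d)+o(e)$, $o(\mathsf Ed)=2^{o(d)}-1$. The relation $\to$ on $\mathbb{E}(\mathcal{D})$ is inductively generated by: $d\to d'$ in $\mathcal{D}$ implies $d\to d'$; $d\to d'$ implies $\mathsf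 Id\to\mathsf Id'$; $e\to e'$ implies $\mathsf Rde\to\mathsf Rde'$; $d\to d'$ implies $\mathsf Ed\to\mathsf Ed'$; $\mathsf Rde\to\mathsf Id$ always; and $d\to d'$ together with $d\to d''$ implies $\mathsf Ed\to\mathsf R(\mathsf Ed')(\mathsf Ed'')$. The size function $\vartheta_d\colon\mathbb{N}\to\mathbb{N}$ for $d\in\mathbb{E}(\mathcal{D})$ is defined by recursion: $\vartheta_d(s)=s$ for $d\in\mathcal{D}$; $\vartheta_{\mathsf Id}(s)=\vartheta_d(s)+1$; $\vartheta_{\mathsf Rde}(s)=\max\{|d|+1+\vartheta_e(s),\ \vartheta_d(s)+1\}$; $\vartheta_{\mathsf Ed}(s)=o(d)\cdot(\vartheta_d(s)+2)$. A set of notations is called $s$-bounded if all its elements have size at most $s$. *)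

theory Defs
  imports Main
begin

definition abstract_system ::
  "'d set \<Rightarrow> ('d \<Rightarrow> nat) \<Rightarrow> ('d \<Rightarrow> nat) \<Rightarrow> ('d \<Rightarrow> 'd \<Rightarrow> bool) \<Rightarrow> bool" where
  "abstract_system D sz ht st \<longleftrightarrow>
     (\<forall>d\<in>D. sz d > 0 \<and> ht d > 0) \<and>
     (\<forall>d\<in>D. \<forall>d'\<in>D. st d d' \<longrightarrow> ht d' < ht d)"

datatype 'd eterm = Base 'd | I "'d eterm" | R "'d eterm" "'d eterm" | E "'d eterm"

inductive in_E :: "'d set \<Rightarrow> 'd eterm \<Rightarrow> bool" for D where
  base: "d \<in> D \<Longrightarrow> in_E D (Base d)"
| I: "in_E D d \<Longrightarrow> in_E D (I d)"
| R: "in_E D d \<Longrightarrow> in_E D e \<Longrightarrow> in_E D (R d e)"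
| E: "in_E D d \<Longrightarrow> in_E D (E d)"

definition EE :: "'d set \<Rightarrow> 'd eterm set" where
  "EE D = {d. in_E D d}"

fun esize :: "('d \<Rightarrow> nat) \<Rightarrow> 'd eterm \<Rightarrow> nat" where
  "esize sz (Base d) = sz d"
| "esize sz (I d) = esize sz d + 1"
| "esize sz (R d e) = esize sz d + esize sz e + 1"
| "esize sz (E d) = esize sz d + 1"

fun eht :: "('d \<Rightarrow> nat) \<Rightarrow> 'd eterm \<Rightarrow> nat" where
  "eht ht (Base d) = ht d"
| "eht ht (I d) = eht ht d"
| "eht ht (R d e) = eht ht d + eht ht e"
| "eht ht (E d) = 2 ^ eht ht d - 1"

inductive estep :: "'d set \<Rightarrow> ('d \<Rightarrow> 'd \<Rightarrow> bool) \<Rightarrow> 'd eterm \<Rightarrow> 'd eterm \<Rightarrow> bool"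
  for D st where
  base: "d \<in> D \<Longrightarrow> d' \<in> D \<Longrightarrow> st d d' \<Longrightarrow> estep D st (Base d) (Base d')"
| I: "estep D st d d' \<Longrightarrow> estep D st (I d) (I d')"
| R: "in_E D d \<Longrightarrow> estep D st e e' \<Longrightarrow> estep D st (R d e) (R d e')"
| E: "estep D st d d' \<Longrightarrow> estep D st (E d) (E d')"
| RI: "in_E D d \<Longrightarrow> in_E D e \<Longrightarrow> estep D st (R d e) (I d)"
| ER: "estep D st d d' \<Longrightarrow> estep D st d d'' \<Longrightarrow> estep D st (E d) (R (E d') (E d''))"

fun vartheta :: "('d \<Rightarrow> nat) \<Rightarrow> ('d \<Rightarrow> nat) \<Rightarrow> 'd eterm \<Rightarrow> nat \<Rightarrow> nat" where
  "vartheta sz ht (Base d) s = s"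
| "vartheta sz ht (I d) s = vartheta sz ht d s + 1"
| "vartheta sz ht (R d e) s = max (esize sz d + 1 + vartheta sz ht e s) (vartheta sz ht d s + 1)"
| "vartheta sz ht (E d) s = eht ht d * (vartheta sz ht d s + 2)"

definition bounded :: "('a \<Rightarrow> nat) \<Rightarrow> 'a set \<Rightarrow> nat \<Rightarrow> bool" where
  "bounded sz A s \<longleftrightarrow> (\<forall>a\<in>A. sz a \<le> s)"

end

theory Submission
  imports Defs
begin

lemma estep_inE: "estep D st d d' \<Longrightarrow> in_E D d \<and> in_E D d'"
  by (induction rule: estep.induct) (auto intro: in_E.intros)

lemma eht_pos: "in_E D d \<Longrightarrow> abstract_system D sz ht st \<Longrightarrow> eht ht d > 0"
proof (induction rule: in_E.induct)
  case (E d)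
  then have "(1::nat) < 2 ^ eht ht d" using one_less_power[of "2::nat" "eht ht d"] by simp
  then show ?case by simp
qed (auto simp: abstract_system_def)

lemma size_le: "in_E D d \<Longrightarrow> bounded sz D s \<Longrightarrow> abstract_system D sz ht st
   \<Longrightarrow> esize sz d \<le> vartheta sz ht d s"
proof (induction rule: in_E.induct)
  case (base d) then show ?case by (simp add: bounded_def)
next
  case (E d)
  have "eht ht d > 0" using eht_pos E by metis
  then have "vartheta sz ht d s + 2 \<le> eht ht d * (vartheta sz ht d s + 2)" using mult_le_mono1[of 1 "eht ht d" "vartheta sz ht d s + 2"] by simp
  then show ?case using E by simp
qed auto

lemma pow_lt: "(a::nat) < b \<Longrightarrow> 2 ^ a - 1 < (2::nat) ^ b - 1"
proof -
  assume "a < b"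
  then have "(2::nat) ^ a < 2 ^ b" by simp
  moreover have "(1::nat) \<le> 2 ^ a" by simp
  ultimately show ?thesis by linarith
qed

lemma step_dec:
  assumes A: "abstract_system D sz ht st" and B: "bounded sz D s"
  shows "estep D st d d' \<Longrightarrow> eht ht d' < eht ht d \<and> vartheta sz ht d' s \<le> vartheta sz ht d s"
proof (induction rule: estep.induct)
  case (base d d')
  then show ?case using A by (simp add: abstract_system_def)
next
  case (R d e e')
  then show ?case by auto
next
  case (E d d')
  then have "eht ht d' * (vartheta sz ht d' s + 2) \<le> eht ht d * (vartheta sz ht d s + 2)"
    by (intro mult_le_mono) auto
  then show ?case using E pow_lt by auto
next
  case (RI d e)
  have "eht ht e > 0" using eht_pos[OF RI(2) A] .
  then show ?case by auto
next
  case (ER d d' d'')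
  have i1: "in_E D d'" "in_E D d''" using estep_inE ER(1,2) by blast+
  define n where "n = eht ht d - 1"
  have hd: "eht ht d = n + 1" using ER n_def by linarith
  have h1: "eht ht d' \<le> n" "eht ht d'' \<le> n" using ER hd by auto
  have s1: "esize sz d' \<le> vartheta sz ht d s"
    using size_le[OF i1(1) B A] ER by linarith
  let ?v = "vartheta sz ht d s"
  have "eht ht d'' * (vartheta sz ht d'' s + 2) \<le> n * (?v + 2)"
    using h1 ER by (intro mult_le_mono) auto
  then have c1: "esize sz d' + 2 + eht ht d'' * (vartheta sz ht d'' s + 2) \<le> (n+1) * (?v + 2)"
    using s1 by simp
  have "eht ht d' * (vartheta sz ht d' s + 2) \<le> n * (?v + 2)"
    using h1 ER by (intro mult_le_mono) auto
  then have c2: "eht ht d' * (vartheta sz ht d' s + 2) + 1 \<le> (n+1) * (?v + 2)" by simp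
  have p1: "(2::nat) ^ eht ht d' \<le> 2 ^ n" "(2::nat) ^ eht ht d'' \<le> 2 ^ n"
    using h1 by (auto intro: power_increasing)
  have p2: "(1::nat) \<le> 2 ^ eht ht d'" "(1::nat) \<le> 2 ^ eht ht d''" by auto
  have p3: "(2::nat) ^ (n+1) = 2 * 2 ^ n" by simp
  have "(2::nat) ^ eht ht d' - 1 + (2 ^ eht ht d'' - 1) < 2 ^ (n+1) - 1"
    unfolding p3 using p1 p2 by linarith
  then show ?case using c1 c2 hd by simp
qed auto

theorem mainTheorem6:
  fixes D :: "'d set" and sz ht :: "'d \<Rightarrow> nat" and st :: "'d \<Rightarrow> 'd \<Rightarrow> bool"
    and s :: nat and d :: "'d eterm"
  assumes "abstract_system D sz ht st"
    and "bounded sz D s"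
    and "d \<in> EE D"
  shows "bounded (esize sz) {d' \<in> EE D. (estep D st)\<^sup>*\<^sup>* d d'} (vartheta sz ht d s)"
proof -
  have "\<And>d'. (estep D st)\<^sup>*\<^sup>* d d' \<Longrightarrow> vartheta sz ht d' s \<le> vartheta sz ht d s"
  proof -
    fix d' assume "(estep D st)\<^sup>*\<^sup>* d d'"
    then show "vartheta sz ht d' s \<le> vartheta sz ht d s"
      by (induction rule: rtranclp_induct) (use step_dec[OF assms(1,2)] in fastforce)+
  qed
  then show ?thesis using size_le[OF _ assms(2,1)] unfolding bounded_def EE_def
    by (auto intro: le_trans)
qed

end
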